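(* Let $G=(V,E_1,\dots,E_k)$ be a complete edge-colored graph. If every monochromatic subgraph $G_{|i}$ of $G$ is a simple permutation graph (each with respect to some labeling, possibly depending on $i$) and $G$ does not contain a rainbow triangle, then $G$ is a complete edge-colored permutation graph.
   Context: A complete $k$-edge-colored graph $G=(V,E_1,\dots,E_k)$ is the complete graph on a finite set $V$ with edges partitioned into $k$ nonempty color classes $E_i$ (the one-vertex graph also counts); $G_{|i}=(V,E_i)$. A labeling is a bijection $\ell:V\to\{1,\dots,|V|\}$. A graph $(V,E)$ with labeling $\ell$ is a simple permutation graph of a permutation $\pi$ if for all $u,v$ with $\ell(u)>\ell(v)$: $\{u,v\}\in E$ iff $\pi^{-1}(\ell(u))<\pi^{-1}(\ell(v))$; a graph is a simple permutation graph if such $\ell$ and $\pi$ exist. $G$ is a complete edge-colored permutation graph if there exist a single labeling $\ell$ and permutations $\pi_1,\dots,\pi_k$ with $(G_{|i},\ell)$ a simple permutation graph of $\pi_i$ for all $i$. A rainbow triangle is a set of three vertices whose three edges have pairwise distinct colors. *)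

theory Defs
  imports Main "HOL-Combinatorics.Permutations"
begin

text \<open>A complete k-edge-colored graph on a finite nonempty vertex set V: the colour of the
  edge {u,v} (u \<noteq> v) is col u v, symmetric, with values in {1..k}, and every colour class
  is nonempty (this is vacuous for the one-vertex graph, which has no edges).\<close>
definition complete_edge_colored :: "'a set \<Rightarrow> nat \<Rightarrow> ('a \<Rightarrow> 'a \<Rightarrow> nat) \<Rightarrow> bool" where
  "complete_edge_colored V k col \<longleftrightarrow>
     finite V \<and> V \<noteq> {} \<and>
     (\<forall>u\<in>V. \<forall>v\<in>V. u \<noteq> v \<longrightarrow> col u v = col v u \<and> col u v \<in> {1..k}) \<and>
     (card V \<ge> 2 \<longrightarrow> (\<forall>i\<in>{1..k}. \<exists>u\<in>V. \<exists>v\<in>V. u \<noteq> v \<and> col u v = i))"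

definition color_class :: "'a set \<Rightarrow> ('a \<Rightarrow> 'a \<Rightarrow> nat) \<Rightarrow> nat \<Rightarrow> 'a set set" where
  "color_class V col i = {{u, v} | u v. u \<in> V \<and> v \<in> V \<and> u \<noteq> v \<and> col u v = i}"

definition labeling :: "'a set \<Rightarrow> ('a \<Rightarrow> nat) \<Rightarrow> bool" where
  "labeling V l \<longleftrightarrow> bij_betw l V {1..card V}"

definition simple_perm_graph_of :: "'a set \<Rightarrow> 'a set set \<Rightarrow> ('a \<Rightarrow> nat) \<Rightarrow> (nat \<Rightarrow> nat) \<Rightarrow> bool" where
  "simple_perm_graph_of V E l \<pi> \<longleftrightarrow>
     labeling V l \<and> \<pi> permutes {1..card V} \<and>
     (\<forall>u\<in>V. \<forall>v\<in>V. l u > l v \<longrightarrow> ({u, v} \<in> E \<longleftrightarrow> inv \<pi> (l u) < inv \<pi> (l v)))"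

definition simple_perm_graph :: "'a set \<Rightarrow> 'a set set \<Rightarrow> bool" where
  "simple_perm_graph V E \<longleftrightarrow> (\<exists>l \<pi>. simple_perm_graph_of V E l \<pi>)"

definition complete_edge_colored_perm_graph :: "'a set \<Rightarrow> nat \<Rightarrow> ('a \<Rightarrow> 'a \<Rightarrow> nat) \<Rightarrow> bool" where
  "complete_edge_colored_perm_graph V k col \<longleftrightarrow>
     complete_edge_colored V k col \<and>
     (\<exists>l. \<exists>\<pi> :: nat \<Rightarrow> nat \<Rightarrow> nat. \<forall>i\<in>{1..k}. simple_perm_graph_of V (color_class V col i) l (\<pi> i))"

definition rainbow_triangle :: "'a set \<Rightarrow> ('a \<Rightarrow> 'a \<Rightarrow> nat) \<Rightarrow> 'a \<Rightarrow> 'a \<Rightarrow> 'a \<Rightarrow> bool" where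
  "rainbow_triangle V col x y z \<longleftrightarrow>
     x \<in> V \<and> y \<in> V \<and> z \<in> V \<and> x \<noteq> y \<and> y \<noteq> z \<and> x \<noteq> z \<and>
     col x y \<noteq> col y z \<and> col y z \<noteq> col x z \<and> col x y \<noteq> col x z"

end

theory Submission
  imports Defs "HOL-Library.Product_Lexorder"
begin

definition symc :: "'a set \<Rightarrow> ('a \<Rightarrow> 'a \<Rightarrow> nat) \<Rightarrow> bool" where
  "symc W col \<longleftrightarrow> (\<forall>x\<in>W. \<forall>y\<in>W. col x y = col y x)"
definition norb :: "'a set \<Rightarrow> ('a \<Rightarrow> 'a \<Rightarrow> nat) \<Rightarrow> bool" where
  "norb W col \<longleftrightarrow> (\<forall>x\<in>W. \<forall>y\<in>W. \<forall>z\<in>W. x \<noteq> y \<longrightarrow> y \<noteq> z \<longrightarrow> x \<noteq> z \<longrightarrow>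
      col x y = col y z \<or> col y z = col x z \<or> col x y = col x z)"
definition twocol :: "'a set \<Rightarrow> ('a \<Rightarrow> 'a \<Rightarrow> nat) \<Rightarrow> bool" where
  "twocol W col \<longleftrightarrow> (\<exists>r s. \<forall>u\<in>W. \<forall>v\<in>W. u \<noteq> v \<longrightarrow> col u v = r \<or> col u v = s)"
definition cedge :: "'a set \<Rightarrow> ('a \<Rightarrow> 'a \<Rightarrow> nat) \<Rightarrow> nat \<Rightarrow> 'a \<Rightarrow> 'a \<Rightarrow> bool" where
  "cedge W col i x y \<longleftrightarrow> x \<in> W \<and> y \<in> W \<and> x \<noteq> y \<and> col x y = i"
abbreviation conn where "conn W col i \<equiv> (cedge W col i)\<^sup>*\<^sup>*"

lemma conn_sym:
  assumes "symc W col" "conn W col i x y" shows "conn W col i y x"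
  using assms(2)
proof (induction rule: rtranclp_induct)
  case base then show ?case by simp
next
  case (step y z)
  then have "cedge W col i z y" using assms(1) by (auto simp: cedge_def symc_def)
  then show ?case using step(3) by (meson converse_rtranclp_into_rtranclp)
qed

lemma conn_into:
  assumes "conn W col i u v" "u \<noteq> v" shows "\<exists>y. cedge W col i y v"
  using assms by (metis rtranclp.cases)

lemma conn_mono:
  assumes "conn W' col i u v" "W' \<subseteq> W" shows "conn W col i u v"
  using assms(1)
proof (induction rule: rtranclp_induct)
  case base then show ?case by simp
next
  case (step y z)
  then have "cedge W col i y z" using assms(2) by (auto simp: cedge_def)
  then show ?case using step(3) by (meson rtranclp.rtrancl_into_rtrancl)
qed

lemma module_conn:
  assumes "symc W col" "norb W col" "w \<in> W" "\<not> conn W col i a w" "conn W col i a y"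
  shows "col w y = col w a"
  using assms(5)
proof (induction rule: rtranclp_induct)
  case base then show ?case by simp
next
  case (step y z)
  have yz: "y \<in> W" "z \<in> W" "y \<noteq> z" "col y z = i" using step(2) by (auto simp: cedge_def)
  have "w \<noteq> y" "w \<noteq> z" using assms(4) step(1,2) by (auto intro: rtranclp.rtrancl_into_rtrancl)
  have "col w y \<noteq> i"
  proof
    assume "col w y = i"
    then have "cedge W col i y w" using yz \<open>w \<noteq> y\<close> assms(1,3) by (auto simp: cedge_def symc_def)
    then show False using assms(4) step(1) by (meson rtranclp.rtrancl_into_rtrancl)
  qed
  have "col w z \<noteq> i"
  proof
    assume "col w z = i"
    then have "cedge W col i z w" using yz \<open>w \<noteq> z\<close> assms(1,3) by (auto simp: cedge_def symc_def)
    then show False using assms(4) step(1,2) by (meson rtranclp.rtrancl_into_rtrancl)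
  qed
  have "col w y = col y z \<or> col y z = col w z \<or> col w y = col w z"
    using assms(2) assms(3) yz \<open>w \<noteq> y\<close> \<open>w \<noteq> z\<close> unfolding norb_def by blast
  then show ?case using step(3) yz \<open>col w y \<noteq> i\<close> \<open>col w z \<noteq> i\<close> by auto
qed

lemma path_to_v:
  assumes "conn (insert v F) col i y v" "v \<notin> F"
  shows "y \<in> F \<longrightarrow> (\<exists>z\<in>F. conn F col i y z \<and> col z v = i)"
  using assms(1)
proof (induction rule: converse_rtranclp_induct)
  case base then show ?case using assms(2) by simp
next
  case (step y y')
  have e: "y \<in> insert v F" "y' \<in> insert v F" "y \<noteq> y'" "col y y' = i" using step(1) by (auto simp: cedge_def)
  show ?case
  proof
    assume yF: "y \<in> F"
    show "\<exists>z\<in>F. conn F col i y z \<and> col z v = i"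
    proof (cases "y' = v")
      case True
      have "conn F col i y y" by simp
      then show ?thesis using e yF True by blast
    next
      case False
      then have y'F: "y' \<in> F" using e by simp
      have "\<exists>z\<in>F. conn F col i y' z \<and> col z v = i" using step(3) y'F by (rule mp)
      then obtain z where z: "z \<in> F" "conn F col i y' z" "col z v = i" by blast
      have "cedge F col i y y'" using e yF y'F by (simp add: cedge_def)
      then have "conn F col i y z" using z(2) by (rule converse_rtranclp_into_rtranclp)
      then show ?thesis using z by blast
    qed
  qed
qed

lemma symc_sub: "symc W col \<Longrightarrow> W' \<subseteq> W \<Longrightarrow> symc W' col"
  unfolding symc_def by blast
lemma norb_sub: "norb W col \<Longrightarrow> W' \<subseteq> W \<Longrightarrow> norb W' col"
  unfolding norb_def by blast

lemma symcD: "symc W col \<Longrightarrow> x \<in> W \<Longrightarrow> y \<in> W \<Longrightarrow> col x y = col y x"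
  unfolding symc_def by blast

lemma gallai:
  assumes "finite W"
  shows "symc W col \<Longrightarrow> norb W col \<Longrightarrow> \<not> twocol W col \<Longrightarrow>
    \<exists>i a b x. a \<in> W \<and> b \<in> W \<and> x \<in> W \<and> a \<noteq> b \<and> col a b = i \<and> \<not> conn W col i a x"
  using assms
proof (induction W rule: finite_induct)
  case empty then show ?case by (simp add: twocol_def)
next
  case (insert v F)
  define W where "W = insert v F"
  have sF: "symc F col" "norb F col" using insert.prems symc_sub norb_sub by blast+
  have sW: "symc W col" "norb W col" using insert.prems W_def by auto
  have nt: "\<And>r s. \<exists>u\<in>W. \<exists>w\<in>W. u \<noteq> w \<and> col u w \<noteq> r \<and> col u w \<noteq> s"
    using insert.prems(3) W_def unfolding twocol_def by blast
  show ?case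
  proof (cases "twocol F col")
    case True
    then obtain r s where rs: "\<forall>u\<in>F. \<forall>w\<in>F. u \<noteq> w \<longrightarrow> col u w = r \<or> col u w = s"
      unfolding twocol_def by blast
    obtain u w where uw: "u \<in> W" "w \<in> W" "u \<noteq> w" "col u w \<noteq> r" "col u w \<noteq> s" using nt by blast
    obtain y0 where y0: "y0 \<in> F" "col v y0 \<noteq> r" "col v y0 \<noteq> s"
    proof (cases "u = v")
      case True
      then have "w \<in> F" using uw W_def by auto
      then show ?thesis using that uw True by blast
    next
      case False
      then have uF: "u \<in> F" using uw W_def by auto
      then have "w = v" using uw rs W_def by auto
      then have "col v u = col u w" using symcD[OF sW(1), of u v] uF W_def by auto
      then show ?thesis using that uw uF by auto
    qed
    define t where "t = col v y0"
    show ?thesis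
    proof (cases "\<exists>w\<in>F. col v w \<noteq> t")
      case True
      then obtain w where w: "w \<in> F" "col v w \<noteq> t" by blast
      have "\<not> conn W col t v w"
      proof
        assume "conn W col t v w"
        moreover have "v \<noteq> w" using w(1) insert.hyps(2) by auto
        ultimately obtain y where "cedge W col t y w" using conn_into by metis
        then have "y \<in> W" "y \<noteq> w" "col y w = t" unfolding cedge_def by auto
        moreover have "y \<noteq> v" using calculation w(2) symcD[OF sW(1), of v w] W_def w(1) by auto
        ultimately have "y \<in> F" "y \<noteq> w" "col y w = t" using W_def by auto
        then have "col y w = r \<or> col y w = s" using rs w(1) by blast
        then show False using \<open>col y w = t\<close> y0 t_def by auto
      qed
      then show ?thesis
        by (intro exI[of _ t] exI[of _ v] exI[of _ y0] exI[of _ w]) (use y0 w W_def t_def insert.hyps(2) in auto)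
    next
      case False
      obtain u w where uw: "u \<in> W" "w \<in> W" "u \<noteq> w" "col u w \<noteq> r" "col u w \<noteq> t" using nt by blast
      have "u \<noteq> v" using uw False W_def by auto
      moreover have "w \<noteq> v" using uw False W_def symcD[OF sW(1), of u w] by auto
      ultimately have uwF: "u \<in> F" "w \<in> F" using uw W_def by auto
      have cs: "col u w = s" using rs uwF uw by blast
      have "\<not> conn W col s u v"
      proof
        assume "conn W col s u v"
        then obtain y where "cedge W col s y v" using conn_into[OF _ \<open>u \<noteq> v\<close>] by blast
        then have "y \<in> F" "col y v = s" unfolding cedge_def W_def by auto
        moreover have "col v y = t" using False \<open>y \<in> F\<close> by blast
        moreover have "col y v = col v y" using symcD[OF sW(1), of y v] \<open>y \<in> F\<close> W_def by blast
        ultimately show False using uw cs by simp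
      qed
      then show ?thesis
        by (intro exI[of _ s] exI[of _ u] exI[of _ w] exI[of _ v]) (use uw uwF cs W_def in auto)
    qed
  next
    case False
    obtain red a b x where IH: "a \<in> F" "b \<in> F" "x \<in> F" "a \<noteq> b" "col a b = red" "\<not> conn F col red a x"
      using insert.IH[OF sF False] by blast
    show ?thesis
    proof (rule ccontr)
      assume "\<not> ?thesis"
      then have AllC: "\<And>i a b x. a \<in> W \<Longrightarrow> b \<in> W \<Longrightarrow> x \<in> W \<Longrightarrow> a \<noteq> b \<Longrightarrow> col a b = i \<Longrightarrow> conn W col i a x"
        using W_def by blast
      have FW: "F \<subseteq> W" using W_def by auto
      have nbr: "\<exists>z\<in>F. conn F col red y z \<and> col z v = red" if "y \<in> F" for y
      proof -
        have "conn W col red a y" using AllC[of a b y red] IH FW that by auto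
        moreover have "conn W col red a v" using AllC[of a b v red] IH FW W_def by auto
        ultimately have "conn W col red y v" using conn_sym[OF sW(1)] by (meson rtranclp_trans)
        then show ?thesis using path_to_v[of v F col red y] that insert.hyps(2) W_def by auto
      qed
      have ceq: "col v x1 = col x1 y" if "x1 \<in> F" "col v x1 \<noteq> red" "y \<in> F" "\<not> conn F col red x1 y" for x1 y
      proof -
        obtain z where z: "z \<in> F" "conn F col red y z" "col z v = red" using nbr \<open>y \<in> F\<close> by blast
        have nz: "\<not> conn F col red x1 z" using that(4) z(2) conn_sym[OF sF(1)] by (meson rtranclp_trans)
        have "x1 \<noteq> z" using nz by auto
        have "col x1 z \<noteq> red"
        proof
          assume "col x1 z = red"
          then have "cedge F col red x1 z" using \<open>x1 \<noteq> z\<close> z(1) that(1) unfolding cedge_def by blast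
          then show False using nz by (meson r_into_rtranclp)
        qed
        have "v \<noteq> x1" "v \<noteq> z" using that(1) z(1) insert.hyps(2) by auto
        then have "col v x1 = col x1 z \<or> col x1 z = col v z \<or> col v x1 = col v z"
          using sW(2) W_def that(1) z(1) \<open>x1 \<noteq> z\<close> unfolding norb_def by blast
        moreover have "col v z = red" using z(3) symcD[OF sW(1), of v z] W_def z(1) by auto
        ultimately have "col v x1 = col x1 z" using that(2) \<open>col x1 z \<noteq> red\<close> by auto
        moreover have "col x1 z = col x1 y"
          using module_conn[OF sF that(1), of red y z] z(2) that(4) conn_sym[OF sF(1)] by blast
        ultimately show ?thesis by simp
      qed
      have claim: "col v x1 = col v x2" if "x1 \<in> F" "x2 \<in> F" "col v x1 \<noteq> red" "col v x2 \<noteq> red" for x1 x2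
      proof (cases "conn F col red x1 x2")
        case False
        then have "\<not> conn F col red x2 x1" using conn_sym[OF sF(1)] by blast
        moreover have "col v x1 = col x1 x2" using ceq[OF that(1,3,2) False] .
        moreover have "col v x2 = col x2 x1" using ceq[OF that(2,4,1)] calculation(1) .
        ultimately show ?thesis using symcD[OF sF(1) that(1,2)] by simp
      next
        case True
        obtain y0 where y0: "y0 \<in> F" "\<not> conn F col red x1 y0"
          using IH True conn_sym[OF sF(1)] by (meson rtranclp_trans)
        have n2: "\<not> conn F col red x2 y0" using y0 True by (meson rtranclp_trans)
        have "col y0 x2 = col y0 x1"
          using module_conn[OF sF y0(1), of red x1 x2] y0 True by blast
        then show ?thesis using ceq[OF that(1,3) y0] ceq[OF that(2,4) y0(1) n2]
            symcD[OF sF(1) y0(1) that(1)] symcD[OF sF(1) y0(1) that(2)] by simp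
      qed
      define c where "c = (if \<exists>x1\<in>F. col v x1 \<noteq> red then col v (SOME x1. x1 \<in> F \<and> col v x1 \<noteq> red) else red)"
      have vc: "col v y = red \<or> col v y = c" if "y \<in> F" for y
      proof (cases "col v y = red")
        case False
        then have ex: "\<exists>x1. x1 \<in> F \<and> col v x1 \<noteq> red" using that by blast
        then have "(SOME x1. x1 \<in> F \<and> col v x1 \<noteq> red) \<in> F \<and> col v (SOME x1. x1 \<in> F \<and> col v x1 \<noteq> red) \<noteq> red"
          by (rule someI_ex)
        then show ?thesis using claim[OF that] False ex unfolding c_def by auto
      qed simp
      obtain u w where uw: "u \<in> W" "w \<in> W" "u \<noteq> w" "col u w \<noteq> red" "col u w \<noteq> c" using nt by blast
      have "u \<noteq> v"
      proof
        assume "u = v"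
        then have "w \<in> F" using uw W_def by auto
        then show False using vc[of w] uw \<open>u = v\<close> by auto
      qed
      have "w \<noteq> v"
      proof
        assume "w = v"
        then have "u \<in> F" using uw W_def by auto
        then show False using vc[of u] uw \<open>w = v\<close> symcD[OF sW(1), of u v] W_def by auto
      qed
      then have "conn W col (col u w) u v" using AllC uw W_def by blast
      then obtain y where "cedge W col (col u w) y v" using conn_into[OF _ \<open>u \<noteq> v\<close>] by blast
      then have "y \<in> F" "col y v = col u w" unfolding cedge_def W_def by auto
      then show False using vc[of y] uw symcD[OF sW(1), of y v] W_def by auto
    qed
  qed
qed

definition permc :: "'a set \<Rightarrow> ('a \<Rightarrow> 'a \<Rightarrow> nat) \<Rightarrow> nat \<Rightarrow> bool" where
  "permc W col i \<longleftrightarrow> (\<exists>(l::'a \<Rightarrow> nat) (p::'a \<Rightarrow> nat). inj_on l W \<and>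
      (\<forall>u\<in>W. \<forall>v\<in>W. l v < l u \<longrightarrow> (col u v = i \<longleftrightarrow> p u < p v)))"
definition goodf :: "'a set \<Rightarrow> ('a \<Rightarrow> 'a \<Rightarrow> nat) \<Rightarrow> ('a \<Rightarrow> 'b::linorder) \<Rightarrow> bool" where
  "goodf W col f \<longleftrightarrow> (\<forall>a\<in>W. \<forall>b\<in>W. \<forall>c\<in>W. f a < f b \<longrightarrow> f b < f c \<longrightarrow>
      col a c = col a b \<or> col a c = col b c)"

lemma rank_rel:
  fixes R :: "'a \<Rightarrow> 'a \<Rightarrow> bool"
  assumes fin: "finite V"
    and tr: "\<And>u v w. u \<in> V \<Longrightarrow> v \<in> V \<Longrightarrow> w \<in> V \<Longrightarrow> R u v \<Longrightarrow> R v w \<Longrightarrow> R u w"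
    and irr: "\<And>u. u \<in> V \<Longrightarrow> \<not> R u u"
    and tot: "\<And>u v. u \<in> V \<Longrightarrow> v \<in> V \<Longrightarrow> u \<noteq> v \<Longrightarrow> R u v \<or> R v u"
  shows "bij_betw (\<lambda>u. card {z\<in>V. R z u} + 1) V {1..card V}"
    "\<And>u v. u \<in> V \<Longrightarrow> v \<in> V \<Longrightarrow> card {z\<in>V. R z u} + 1 < card {z\<in>V. R z v} + 1 \<longleftrightarrow> R u v"
proof -
  define q where "q = (\<lambda>u. card {z\<in>V. R z u} + 1)"
  have lt: "q u < q v" if "u \<in> V" "v \<in> V" "R u v" for u v
  proof -
    have "{z\<in>V. R z u} \<subset> {z\<in>V. R z v}"
      using tr that irr by blast
    then show ?thesis unfolding q_def using fin by (simp add: psubset_card_mono)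
  qed
  have iff: "q u < q v \<longleftrightarrow> R u v" if "u \<in> V" "v \<in> V" for u v
  proof
    assume "q u < q v"
    show "R u v"
    proof (rule ccontr)
      assume "\<not> R u v"
      then have "u = v \<or> R v u" using tot that by blast
      then show False using lt[of v u] that \<open>q u < q v\<close> by auto
    qed
  qed (use lt that in auto)
  have inj: "inj_on q V"
  proof (rule inj_onI)
    fix u v assume "u \<in> V" "v \<in> V" "q u = q v"
    then show "u = v" using tot lt by fastforce
  qed
  have rng: "q ` V \<subseteq> {1..card V}"
  proof
    fix y assume "y \<in> q ` V"
    then obtain u where u: "u \<in> V" "y = q u" by blast
    have "{z\<in>V. R z u} \<subseteq> V - {u}" using irr by auto
    then have "card {z\<in>V. R z u} \<le> card (V - {u})" using fin by (simp add: card_mono)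
    also have "\<dots> = card V - 1" using u fin by simp
    finally have "card {z\<in>V. R z u} \<le> card V - 1" .
    moreover have "card V \<ge> 1" using u fin by (metis One_nat_def Suc_leI card_gt_0_iff empty_iff)
    ultimately show "y \<in> {1..card V}" using u unfolding q_def by auto
  qed
  have "q ` V = {1..card V}"
    using card_subset_eq[OF _ rng] inj by (simp add: card_image)
  then show "bij_betw q V {1..card V}" using inj unfolding bij_betw_def by simp
  show "\<And>u v. u \<in> V \<Longrightarrow> v \<in> V \<Longrightarrow> card {z\<in>V. R z u} + 1 < card {z\<in>V. R z v} + 1 \<longleftrightarrow> R u v"
    using iff unfolding q_def by blast
qed

lemma rank_fun:
  fixes F :: "'a \<Rightarrow> 'b::linorder"
  assumes "finite V" "inj_on F V"
  shows "\<exists>g::'a \<Rightarrow> nat. bij_betw g V {1..card V} \<and> (\<forall>u\<in>V. \<forall>v\<in>V. g u < g v \<longleftrightarrow> F u < F v)"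
proof -
  have tot: "\<And>u v. u \<in> V \<Longrightarrow> v \<in> V \<Longrightarrow> u \<noteq> v \<Longrightarrow> F u < F v \<or> F v < F u"
  proof -
    fix u v assume "u \<in> V" "v \<in> V" "u \<noteq> v"
    then have "F u \<noteq> F v" using assms(2) by (simp add: inj_on_eq_iff)
    then show "F u < F v \<or> F v < F u" by (rule neqE) simp_all
  qed
  have tr: "\<And>u v w. u \<in> V \<Longrightarrow> v \<in> V \<Longrightarrow> w \<in> V \<Longrightarrow> F u < F v \<Longrightarrow> F v < F w \<Longrightarrow> F u < F w"
    by (rule less_trans)
  have irr: "\<And>u. u \<in> V \<Longrightarrow> \<not> F u < F u" by simp
  note rr = rank_rel[of V "\<lambda>u v. F u < F v", OF assms(1) tr irr tot]
  show ?thesis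
  proof (rule exI[of _ "\<lambda>u. card {z\<in>V. F z < F u} + 1"], intro conjI ballI)
    show "bij_betw (\<lambda>u. card {z\<in>V. F z < F u} + 1) V {1..card V}" by (rule rr(1))
    fix u v assume "u \<in> V" "v \<in> V"
    then show "(card {z\<in>V. F z < F u} + 1 < card {z\<in>V. F z < F v} + 1) = (F u < F v)" using rr(2) by simp
  qed
qed

lemma symc_sub': "symc W col \<Longrightarrow> W' \<subseteq> W \<Longrightarrow> symc W' col" by (rule symc_sub)

lemma permc_sub: "permc W col i \<Longrightarrow> W' \<subseteq> W \<Longrightarrow> permc W' col i"
proof -
  assume "permc W col i" "W' \<subseteq> W"
  then obtain l p where "inj_on (l::'a\<Rightarrow>nat) W" "\<forall>u\<in>W. \<forall>v\<in>W. l v < l u \<longrightarrow> (col u v = i \<longleftrightarrow> (p::'a\<Rightarrow>nat) u < p v)"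
    unfolding permc_def by blast
  then have "inj_on l W'" "\<forall>u\<in>W'. \<forall>v\<in>W'. l v < l u \<longrightarrow> (col u v = i \<longleftrightarrow> p u < p v)"
    using \<open>W' \<subseteq> W\<close> inj_on_subset by blast+
  then show "permc W' col i" unfolding permc_def by blast
qed

lemma twocol_case:
  assumes fin: "finite W" and sym: "symc W col" and tc: "twocol W col"
    and cK: "\<forall>u\<in>W. \<forall>v\<in>W. u \<noteq> v \<longrightarrow> col u v \<in> K" and pK: "\<forall>i\<in>K. permc W col i"
  shows "\<exists>f::'a\<Rightarrow>nat. inj_on f W \<and> goodf W col f"
proof (cases "\<exists>u\<in>W. \<exists>w\<in>W. u \<noteq> w")
  case True
  then obtain u w where uw: "u \<in> W" "w \<in> W" "u \<noteq> w" by blast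
  define r0 where "r0 = col u w"
  have "r0 \<in> K" using cK uw r0_def by blast
  then obtain l p where lp: "inj_on (l::'a\<Rightarrow>nat) W" "\<forall>u\<in>W. \<forall>v\<in>W. l v < l u \<longrightarrow> (col u v = r0 \<longleftrightarrow> (p::'a\<Rightarrow>nat) u < p v)"
    using pK unfolding permc_def by blast
  obtain r s where rs: "\<forall>u\<in>W. \<forall>v\<in>W. u \<noteq> v \<longrightarrow> col u v = r \<or> col u v = s"
    using tc unfolding twocol_def by blast
  define s0 where "s0 = (if r0 = r then s else r)"
  have r0rs: "r0 = r \<or> r0 = s" using rs uw r0_def by blast
  have all: "col x y = r0 \<or> col x y = s0" if "x \<in> W" "y \<in> W" "x \<noteq> y" for x y
  proof -
    have "col x y = r \<or> col x y = s" using rs that by blast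
    then show ?thesis using r0rs unfolding s0_def by auto
  qed
  have "goodf W col l"
    unfolding goodf_def
  proof (intro ballI impI)
    fix a b c assume abc: "a \<in> W" "b \<in> W" "c \<in> W" "l a < l b" "l b < l c"
    have d: "a \<noteq> b" "b \<noteq> c" "a \<noteq> c" using abc by auto
    have "l a < l c" using abc by simp
    have h1: "col c a = r0 \<longleftrightarrow> p c < p a" using lp(2) abc(1,3) \<open>l a < l c\<close> by simp
    have h2: "col b a = r0 \<longleftrightarrow> p b < p a" using lp(2) abc(1,2,4) by simp
    have h3: "col c b = r0 \<longleftrightarrow> p c < p b" using lp(2) abc(2,3,5) by simp
    have s1: "col a c = col c a" "col a b = col b a" "col b c = col c b"
      using symcD[OF sym] abc by auto
    have a1: "col a c = r0 \<or> col a c = s0" "col a b = r0 \<or> col a b = s0" "col b c = r0 \<or> col b c = s0"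
      using all abc d by auto
    show "col a c = col a b \<or> col a c = col b c"
    proof (cases "col a c = r0")
      case True
      then have "p c < p a" using h1 s1 by simp
      then have "p b < p a \<or> p c < p b" by auto
      then show ?thesis using h2 h3 s1 True by auto
    next
      case False
      then have "col a c = s0" using a1 by auto
      have "\<not> (p c < p a)" using h1 s1 False by simp
      then have "\<not> (p b < p a \<and> p c < p b)" by auto
      then have "col a b \<noteq> r0 \<or> col b c \<noteq> r0" using h2 h3 s1 by simp
      then show ?thesis using a1 \<open>col a c = s0\<close> by auto
    qed
  qed
  then show ?thesis using lp(1) by blast
next
  case False
  obtain f :: "'a \<Rightarrow> nat" where "inj_on f W" using finite_imp_inj_to_nat_seg[OF fin] by blast
  moreover have "goodf W col f" unfolding goodf_def using False by (metis less_irrefl)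
  ultimately show ?thesis by blast
qed

lemma subst_good:
  assumes fin: "finite W" and sym: "symc W col" and MW: "M \<subseteq> W" and aM: "a \<in> M"
    and modl: "\<forall>w\<in>W - M. \<forall>y\<in>M. col w y = col w a"
    and i1: "inj_on (f1::'a\<Rightarrow>nat) (insert a (W - M))" and g1: "goodf (insert a (W - M)) col f1"
    and i2: "inj_on (f2::'a\<Rightarrow>nat) M" and g2: "goodf M col f2"
  shows "\<exists>f::'a\<Rightarrow>nat. inj_on f W \<and> goodf W col f"
proof -
  define W1 where "W1 = insert a (W - M)"
  define F where "F = (\<lambda>y. if y \<in> M then (f1 a, f2 y) else (f1 y, 0::nat))"
  have f1ne: "f1 y \<noteq> f1 a" if "y \<in> W" "y \<notin> M" for y
  proof
    assume "f1 y = f1 a"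
    moreover have "y \<in> insert a (W - M)" "a \<in> insert a (W - M)" using that by auto
    ultimately have "y = a" by (rule inj_onD[OF i1])
    then show False using that aM by simp
  qed
  have f1ne2: "f1 y \<noteq> f1 y'" if "y \<in> W" "y \<notin> M" "y' \<in> W" "y' \<notin> M" "y \<noteq> y'" for y y'
  proof
    assume "f1 y = f1 y'"
    moreover have "y \<in> insert a (W - M)" "y' \<in> insert a (W - M)" using that by auto
    ultimately have "y = y'" by (rule inj_onD[OF i1])
    then show False using that by simp
  qed
  have injF: "inj_on F W"
  proof (rule inj_onI)
    fix y y' assume yy: "y \<in> W" "y' \<in> W" "F y = F y'"
    show "y = y'"
    proof (cases "y \<in> M"; cases "y' \<in> M")
      assume "y \<in> M" "y' \<in> M"
      then show ?thesis using yy i2 unfolding F_def by (auto dest: inj_onD)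
    next
      assume "y \<in> M" "y' \<notin> M"
      then show ?thesis using yy f1ne[of y'] unfolding F_def by auto
    next
      assume "y \<notin> M" "y' \<in> M"
      then show ?thesis using yy f1ne[of y] unfolding F_def by auto
    next
      assume "y \<notin> M" "y' \<notin> M"
      then show ?thesis using yy f1ne2[of y y'] unfolding F_def by auto
    qed
  qed
  have colM: "col y w = col a w" if "y \<in> M" "w \<in> W" "w \<notin> M" for y w
  proof -
    have "col w y = col w a" using modl that by blast
    moreover have "col y w = col w y" using symcD[OF sym] that MW by blast
    moreover have "col a w = col w a" using symcD[OF sym] that MW aM by blast
    ultimately show ?thesis by simp
  qed
  have colM': "col w y = col w a" if "y \<in> M" "w \<in> W" "w \<notin> M" for y w
    using modl that by blast
  have G1: "col x z = col x y \<or> col x z = col y z" if "x \<in> W1" "y \<in> W1" "z \<in> W1" "f1 x < f1 y" "f1 y < f1 z" for x y z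
    using g1 that unfolding goodf_def W1_def by blast
  have G2: "col x z = col x y \<or> col x z = col y z" if "x \<in> M" "y \<in> M" "z \<in> M" "f2 x < f2 y" "f2 y < f2 z" for x y z
    using g2 that unfolding goodf_def by blast
  have aW1: "a \<in> W1" unfolding W1_def by simp
  have nW1: "y \<in> W1" if "y \<in> W" "y \<notin> M" for y using that unfolding W1_def by simp
  have goodF: "col x z = col x y \<or> col x z = col y z"
    if xyz: "x \<in> W" "y \<in> W" "z \<in> W" "F x < F y" "F y < F z" for x y z
  proof (cases "x \<in> M"; cases "y \<in> M"; cases "z \<in> M")
    assume "x \<in> M" "y \<in> M" "z \<in> M"
    then show ?thesis using xyz G2 unfolding F_def by auto
  next
    assume m: "x \<in> M" "y \<in> M" "z \<notin> M"
    then show ?thesis using colM[of x z] colM[of y z] xyz by auto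
  next
    assume m: "x \<in> M" "y \<notin> M" "z \<in> M"
    then have "f1 a < f1 y" "f1 y < f1 a" using xyz f1ne[of y] unfolding F_def by auto
    then show ?thesis by simp
  next
    assume m: "x \<in> M" "y \<notin> M" "z \<notin> M"
    then have "f1 a < f1 y" "f1 y < f1 z" using xyz f1ne[of y] unfolding F_def by auto
    then have "col a z = col a y \<or> col a z = col y z" using G1[of a y z] aW1 nW1 m xyz by blast
    then show ?thesis using colM[of x z] colM[of x y] m xyz by auto
  next
    assume m: "x \<notin> M" "y \<in> M" "z \<in> M"
    then show ?thesis using colM'[of z x] colM'[of y x] xyz by auto
  next
    assume m: "x \<notin> M" "y \<in> M" "z \<notin> M"
    then have "f1 x < f1 a" "f1 a < f1 z" using xyz f1ne[of x] f1ne[of z] unfolding F_def by auto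
    then have "col x z = col x a \<or> col x z = col a z" using G1[of x a z] aW1 nW1 m xyz by blast
    then show ?thesis using colM'[of y x] colM[of y z] m xyz by auto
  next
    assume m: "x \<notin> M" "y \<notin> M" "z \<in> M"
    then have "f1 x < f1 y" "f1 y < f1 a" using xyz f1ne[of y] unfolding F_def by auto
    then have "col x a = col x y \<or> col x a = col y a" using G1[of x y a] aW1 nW1 m xyz by blast
    then show ?thesis using colM'[of z x] colM'[of z y] m xyz by auto
  next
    assume m: "x \<notin> M" "y \<notin> M" "z \<notin> M"
    then have "f1 x < f1 y" "f1 y < f1 z" using xyz unfolding F_def by auto
    then show ?thesis using G1[of x y z] nW1 m xyz by blast
  qed
  obtain g :: "'a \<Rightarrow> nat" where g: "bij_betw g W {1..card W}" "\<forall>u\<in>W. \<forall>v\<in>W. g u < g v \<longleftrightarrow> F u < F v"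
    using rank_fun[OF fin injF] by blast
  have "goodf W col g" unfolding goodf_def using goodF g(2) by blast
  moreover have "inj_on g W" using g(1) bij_betw_def by blast
  ultimately show ?thesis by blast
qed

lemma main:
  "finite W \<Longrightarrow> symc W col \<Longrightarrow> norb W col \<Longrightarrow> (\<forall>u\<in>W. \<forall>v\<in>W. u \<noteq> v \<longrightarrow> col u v \<in> K)
   \<Longrightarrow> (\<forall>i\<in>K. permc W col i) \<Longrightarrow> \<exists>f::'a\<Rightarrow>nat. inj_on f W \<and> goodf W col f"
proof (induction "card W" arbitrary: W rule: less_induct)
  case less
  have her: "finite W' \<and> symc W' col \<and> norb W' col \<and> (\<forall>u\<in>W'. \<forall>v\<in>W'. u \<noteq> v \<longrightarrow> col u v \<in> K)
     \<and> (\<forall>i\<in>K. permc W' col i)" if "W' \<subseteq> W" for W'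
  proof (intro conjI)
    show "finite W'" using less.prems(1) that by (rule finite_subset[rotated])
    show "symc W' col" using less.prems(2) that by (rule symc_sub)
    show "norb W' col" using less.prems(3) that by (rule norb_sub)
    show "\<forall>u\<in>W'. \<forall>v\<in>W'. u \<noteq> v \<longrightarrow> col u v \<in> K" using less.prems(4) that by blast
    show "\<forall>i\<in>K. permc W' col i" using less.prems(5) that permc_sub by blast
  qed
  show ?case
  proof (cases "twocol W col")
    case True
    then show ?thesis using twocol_case less.prems(1,2,4,5) by blast
  next
    case False
    obtain i a b x where g: "a \<in> W" "b \<in> W" "x \<in> W" "a \<noteq> b" "col a b = i" "\<not> conn W col i a x"
      using gallai[OF less.prems(1,2,3) False] by blast
    define M where "M = {y\<in>W. conn W col i a y}"
    have MW: "M \<subseteq> W" by (auto simp: M_def)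
    have aM: "a \<in> M" by (simp add: M_def g(1))
    have "cedge W col i a b" using g unfolding cedge_def by simp
    then have bM: "b \<in> M" unfolding M_def using g(2) by (simp add: r_into_rtranclp)
    have xM: "x \<notin> M" using g(6) unfolding M_def by simp
    have modl: "\<forall>w\<in>W - M. \<forall>y\<in>M. col w y = col w a"
    proof (intro ballI)
      fix w y assume "w \<in> W - M" "y \<in> M"
      then have "w \<in> W" "\<not> conn W col i a w" "conn W col i a y" unfolding M_def by auto
      then show "col w y = col w a" using module_conn[OF less.prems(2,3)] by blast
    qed
    define W1 where "W1 = insert a (W - M)"
    have W1W: "W1 \<subseteq> W" using g(1) unfolding W1_def by auto
    have "W1 \<subseteq> W - {b}" using bM g(4) W1W unfolding W1_def by auto
    then have "card W1 \<le> card (W - {b})" using less.prems(1) by (simp add: card_mono)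
    also have "\<dots> < card W" by (rule card_Diff1_less[OF less.prems(1) g(2)])
    finally have cW1: "card W1 < card W" .
    have "M \<subset> W" using MW xM g(3) by blast
    then have cM: "card M < card W" using less.prems(1) by (simp add: psubset_card_mono)
    obtain f1 :: "'a \<Rightarrow> nat" where f1: "inj_on f1 W1" "goodf W1 col f1"
      using less.hyps[OF cW1] her[OF W1W] by blast
    obtain f2 :: "'a \<Rightarrow> nat" where f2: "inj_on f2 M" "goodf M col f2"
      using less.hyps[OF cM] her[OF MW] by blast
    show ?thesis
      using subst_good[OF less.prems(1,2) MW aM modl, of f1 f2] f1 f2 unfolding W1_def by blast
  qed
qed

lemma cc_iff:
  assumes "symc V col" "u \<in> V" "v \<in> V" "u \<noteq> v"
  shows "{u, v} \<in> color_class V col i \<longleftrightarrow> col u v = i"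
proof
  assume "{u, v} \<in> color_class V col i"
  then obtain u' v' where uv: "{u, v} = {u', v'}" "u' \<in> V" "v' \<in> V" "col u' v' = i"
    unfolding color_class_def by blast
  then have "(u = u' \<and> v = v') \<or> (u = v' \<and> v = u')" by (simp add: doubleton_eq_iff)
  then show "col u v = i" using uv symcD[OF assms(1), of u' v'] by auto
next
  assume "col u v = i"
  then show "{u, v} \<in> color_class V col i" unfolding color_class_def using assms by blast
qed

lemma perm_construct:
  assumes fin: "finite V" and sym: "symc V col" and lb: "bij_betw l V {1..card V}" and gd: "goodf V col l"
  shows "\<exists>\<pi>. simple_perm_graph_of V (color_class V col i) l \<pi>"
proof -
  define R where "R = (\<lambda>u v. (l u < l v \<and> col u v \<noteq> i) \<or> (l v < l u \<and> col u v = i))"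
  have injl: "inj_on l V" using lb bij_betw_def by blast
  have irr: "\<And>u. u \<in> V \<Longrightarrow> \<not> R u u" unfolding R_def by simp
  have tot: "R u v \<or> R v u" if "u \<in> V" "v \<in> V" "u \<noteq> v" for u v
  proof -
    have "l u \<noteq> l v" using injl that by (simp add: inj_on_eq_iff)
    moreover have "col u v = col v u" using symcD[OF sym] that by blast
    ultimately show ?thesis unfolding R_def by auto
  qed
  have tr: "R u w" if t: "u \<in> V" "v \<in> V" "w \<in> V" "R u v" "R v w" for u v w
  proof -
    have s: "col u v = col v u" "col v w = col w v" "col u w = col w u"
      using symcD[OF sym] t by blast+
    have G: "\<And>x y z. x \<in> V \<Longrightarrow> y \<in> V \<Longrightarrow> z \<in> V \<Longrightarrow> l x < l y \<Longrightarrow> l y < l z \<Longrightarrow> col x z = col x y \<or> col x z = col y z"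
      using gd unfolding goodf_def by blast
    have "u \<noteq> v" "v \<noteq> w" using t irr by auto
    have "u \<noteq> w"
    proof
      assume "u = w"
      then show False using t(4,5) s unfolding R_def by auto
    qed
    then have d: "l u \<noteq> l v" "l v \<noteq> l w" "l u \<noteq> l w"
      using injl t \<open>u \<noteq> v\<close> \<open>v \<noteq> w\<close> by (simp_all add: inj_on_eq_iff)
    note g1 = G[OF t(1,2,3)] and g2 = G[OF t(1,3,2)] and g3 = G[OF t(2,1,3)]
      and g4 = G[OF t(2,3,1)] and g5 = G[OF t(3,1,2)] and g6 = G[OF t(3,2,1)]
    show ?thesis using t(4,5) d s g1 g2 g3 g4 g5 g6 unfolding R_def
      by (cases "l u < l v"; cases "l v < l w"; cases "l u < l w") auto
  qed
  define q where "q = (\<lambda>u. card {z\<in>V. R z u} + 1)"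
  have qb: "bij_betw q V {1..card V}" and qlt: "\<And>u v. u \<in> V \<Longrightarrow> v \<in> V \<Longrightarrow> q u < q v \<longleftrightarrow> R u v"
  proof -
    note rr = rank_rel[of V R, OF fin tr irr tot]
    show "bij_betw q V {1..card V}" unfolding q_def by (rule rr(1))
    show "\<And>u v. u \<in> V \<Longrightarrow> v \<in> V \<Longrightarrow> q u < q v \<longleftrightarrow> R u v" unfolding q_def using rr(2) by simp
  qed
  define n where "n = card V"
  define \<sigma> where "\<sigma> = (\<lambda>j. if j \<in> {1..n} then q (inv_into V l j) else j)"
  have "bij_betw (q \<circ> inv_into V l) {1..n} {1..n}"
    using bij_betw_trans[OF bij_betw_inv_into[OF lb] qb] unfolding n_def .
  then have "bij_betw \<sigma> {1..n} {1..n}"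
    by (rule bij_betw_cong[THEN iffD1, rotated]) (simp add: \<sigma>_def)
  then have sp: "\<sigma> permutes {1..n}"
    by (rule bij_imp_permutes) (auto simp add: \<sigma>_def)
  define \<pi> where "\<pi> = inv \<sigma>"
  have pp: "\<pi> permutes {1..n}" unfolding \<pi>_def using sp by (rule permutes_inv)
  have ip: "inv \<pi> = \<sigma>" unfolding \<pi>_def using permutes_bij[OF sp] by (rule inv_inv_eq)
  have il: "inv \<pi> (l u) = q u" if "u \<in> V" for u
  proof -
    have "l u \<in> {1..n}" using lb that unfolding n_def by (meson bij_betwE)
    then show ?thesis using ip injl that unfolding \<sigma>_def by (simp add: inv_into_f_f)
  qed
  have "simple_perm_graph_of V (color_class V col i) l \<pi>"
    unfolding simple_perm_graph_of_def labeling_def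
  proof (intro conjI ballI impI)
    show "bij_betw l V {1..card V}" by (rule lb)
    show "\<pi> permutes {1..card V}" using pp unfolding n_def .
    fix u v assume uv: "u \<in> V" "v \<in> V" "l v < l u"
    then have "u \<noteq> v" by auto
    have "{u, v} \<in> color_class V col i \<longleftrightarrow> col u v = i" using cc_iff[OF sym uv(1,2) \<open>u \<noteq> v\<close>] .
    also have "\<dots> \<longleftrightarrow> R u v" unfolding R_def using uv(3) by auto
    also have "\<dots> \<longleftrightarrow> q u < q v" using qlt uv by simp
    also have "\<dots> \<longleftrightarrow> inv \<pi> (l u) < inv \<pi> (l v)" using il uv by simp
    finally show "{u, v} \<in> color_class V col i \<longleftrightarrow> inv \<pi> (l u) < inv \<pi> (l v)" .
  qed
  then show ?thesis by blast
qed

theorem proposition4p14: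
  fixes V :: "'a set" and k :: nat and col :: "'a \<Rightarrow> 'a \<Rightarrow> nat"
  assumes "complete_edge_colored V k col"
    and "\<forall>i\<in>{1..k}. simple_perm_graph V (color_class V col i)"
    and "\<not> (\<exists>x y z. rainbow_triangle V col x y z)"
  shows "complete_edge_colored_perm_graph V k col"
proof -
  have fin: "finite V" and cV: "\<forall>u\<in>V. \<forall>v\<in>V. u \<noteq> v \<longrightarrow> col u v = col v u \<and> col u v \<in> {1..k}"
    using assms(1) unfolding complete_edge_colored_def by blast+
  have sym: "symc V col" unfolding symc_def using cV by metis
  have nr: "norb V col" unfolding norb_def
  proof (intro ballI impI)
    fix x y z assume "x \<in> V" "y \<in> V" "z \<in> V" "x \<noteq> y" "y \<noteq> z" "x \<noteq> z"
    then have "\<not> rainbow_triangle V col x y z" using assms(3) by blast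
    then show "col x y = col y z \<or> col y z = col x z \<or> col x y = col x z"
      using \<open>x \<in> V\<close> \<open>y \<in> V\<close> \<open>z \<in> V\<close> \<open>x \<noteq> y\<close> \<open>y \<noteq> z\<close> \<open>x \<noteq> z\<close>
      unfolding rainbow_triangle_def by blast
  qed
  have cK: "\<forall>u\<in>V. \<forall>v\<in>V. u \<noteq> v \<longrightarrow> col u v \<in> {1..k}" using cV by blast
  have pK: "\<forall>i\<in>{1..k}. permc V col i"
  proof
    fix i assume "i \<in> {1..k}"
    then obtain l \<pi> where sp: "simple_perm_graph_of V (color_class V col i) l \<pi>"
      using assms(2) unfolding simple_perm_graph_def by blast
    then have lb: "bij_betw l V {1..card V}" and
      c: "\<forall>u\<in>V. \<forall>v\<in>V. l u > l v \<longrightarrow> ({u, v} \<in> color_class V col i \<longleftrightarrow> inv \<pi> (l u) < inv \<pi> (l v))"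
      unfolding simple_perm_graph_of_def labeling_def by blast+
    have "inj_on l V" using lb bij_betw_def by blast
    moreover have "\<forall>u\<in>V. \<forall>v\<in>V. l v < l u \<longrightarrow> (col u v = i \<longleftrightarrow> inv \<pi> (l u) < inv \<pi> (l v))"
    proof (intro ballI impI)
      fix u v assume uv: "u \<in> V" "v \<in> V" "l v < l u"
      then have "u \<noteq> v" by auto
      then show "col u v = i \<longleftrightarrow> inv \<pi> (l u) < inv \<pi> (l v)"
        using cc_iff[OF sym uv(1,2) \<open>u \<noteq> v\<close>] c uv by blast
    qed
    ultimately show "permc V col i" unfolding permc_def
      by (intro exI[of _ l] exI[of _ "\<lambda>u. inv \<pi> (l u)"]) simp
  qed
  obtain f :: "'a \<Rightarrow> nat" where f: "inj_on f V" "goodf V col f"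
    using main[OF fin sym nr cK pK] by blast
  obtain l :: "'a \<Rightarrow> nat" where l: "bij_betw l V {1..card V}" "\<forall>u\<in>V. \<forall>v\<in>V. l u < l v \<longleftrightarrow> f u < f v"
    using rank_fun[OF fin f(1)] by blast
  have gl: "goodf V col l" using f(2) l(2) unfolding goodf_def by blast
  have "\<forall>i. \<exists>\<pi>. simple_perm_graph_of V (color_class V col i) l \<pi>"
    using perm_construct[OF fin sym l(1) gl] by blast
  then obtain P where "\<forall>i. simple_perm_graph_of V (color_class V col i) l (P i)"
    by (rule choice[THEN exE]) blast
  then show ?thesis unfolding complete_edge_colored_perm_graph_def using assms(1) by blast
qed

end
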